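(* Let $G$ be a finite graph with nonnegative edge lengths, let $\theta\geq 0$, and let $v$ be a vertex of $G$. Consider the game Graph Exploration on $G$ started at $v$ with parameter $\theta$. Then Bob's payoff under optimal play by both players equals $M(G)-M(G-v)$.
   Context: Graph Exploration: two players, Alice and Bob, take turns choosing the next edge of a self-avoiding walk in $G$ starting at $v$, with Alice moving first. The player who chooses an edge pays its length to the opponent. At each turn the player to move may instead (and, if no move is available, must) terminate the game by paying $\theta/2$ to the opponent. Each player tries to maximize their total payoff; this is a finite zero-sum game of perfect information. For a finite graph $H$ with edge lengths, $M(H)$ denotes the cost of the diluted matching problem: the minimum, over all partial matchings of $H$ (sets of edges no two sharing a vertex), of the sum of the lengths of the edges in the matching plus $\theta/2$ times the number of vertices not covered by it. $G-v$ is the graph obtained from $G$ by deleting $v$ and its incident edges. *)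

theory Defs
  imports Complex_Main
begin

definition wgraph :: "'a set \<Rightarrow> ('a \<Rightarrow> 'a \<Rightarrow> bool) \<Rightarrow> ('a \<Rightarrow> 'a \<Rightarrow> real) \<Rightarrow> bool" where
  "wgraph V E w \<longleftrightarrow> finite V
     \<and> (\<forall>x y. E x y \<longrightarrow> x \<in> V \<and> y \<in> V)
     \<and> (\<forall>x y. E x y \<longrightarrow> E y x)
     \<and> (\<forall>x. \<not> E x x)
     \<and> (\<forall>x y. E x y \<longrightarrow> w x y = w y x \<and> w x y \<ge> 0)"

text \<open>Value of Graph Exploration (net payoff of the player to move), when the walk is at x
  and the set of already visited vertices is S. The natural number is a fuel bound; with
  fuel at least the number of unvisited vertices it never runs out before moves do.\<close>
fun explore_val :: "'a set \<Rightarrow> ('a \<Rightarrow> 'a \<Rightarrow> bool) \<Rightarrow> ('a \<Rightarrow> 'a \<Rightarrow> real) \<Rightarrow> real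
    \<Rightarrow> nat \<Rightarrow> 'a set \<Rightarrow> 'a \<Rightarrow> real" where
  "explore_val V E w \<theta> 0 S x = - \<theta> / 2"
| "explore_val V E w \<theta> (Suc n) S x =
     Max (insert (- \<theta> / 2)
       {- w x u - explore_val V E w \<theta> n (insert u S) u | u. u \<in> V \<and> E x u \<and> u \<notin> S})"

definition bob_payoff :: "'a set \<Rightarrow> ('a \<Rightarrow> 'a \<Rightarrow> bool) \<Rightarrow> ('a \<Rightarrow> 'a \<Rightarrow> real) \<Rightarrow> real \<Rightarrow> 'a \<Rightarrow> real" where
  "bob_payoff V E w \<theta> v = - explore_val V E w \<theta> (card V) {v} v"

definition is_matching :: "'a set \<Rightarrow> ('a \<Rightarrow> 'a \<Rightarrow> bool) \<Rightarrow> ('a \<times> 'a) set \<Rightarrow> bool" where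
  "is_matching V E Mt \<longleftrightarrow>
     (\<forall>(x,y)\<in>Mt. x \<in> V \<and> y \<in> V \<and> E x y)
     \<and> (\<forall>p\<in>Mt. \<forall>q\<in>Mt. p \<noteq> q \<longrightarrow> {fst p, snd p} \<inter> {fst q, snd q} = {})"

definition covered :: "('a \<times> 'a) set \<Rightarrow> 'a set" where
  "covered Mt = fst ` Mt \<union> snd ` Mt"

definition matching_cost :: "'a set \<Rightarrow> ('a \<Rightarrow> 'a \<Rightarrow> real) \<Rightarrow> real \<Rightarrow> ('a \<times> 'a) set \<Rightarrow> real" where
  "matching_cost V w \<theta> Mt = (\<Sum>(x,y)\<in>Mt. w x y) + \<theta> / 2 * real (card (V - covered Mt))"

definition dmatch :: "'a set \<Rightarrow> ('a \<Rightarrow> 'a \<Rightarrow> bool) \<Rightarrow> ('a \<Rightarrow> 'a \<Rightarrow> real) \<Rightarrow> real \<Rightarrow> real" where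
  "dmatch V E w \<theta> = Min (matching_cost V w \<theta> ` {Mt. is_matching V E Mt})"

end

theory Submission
  imports Defs
begin

lemma matchings_finite:
  assumes "finite H" shows "finite {Mt. is_matching H E Mt}"
proof (rule finite_subset[of _ "Pow (H \<times> H)"])
  show "{Mt. is_matching H E Mt} \<subseteq> Pow (H \<times> H)"
    unfolding is_matching_def by fastforce
  show "finite (Pow (H \<times> H))" using assms by simp
qed

lemma matching_finite:
  assumes "finite H" "is_matching H E Mt" shows "finite Mt"
proof (rule finite_subset[of _ "H \<times> H"])
  show "Mt \<subseteq> H \<times> H" using assms(2) unfolding is_matching_def by fastforce
  show "finite (H \<times> H)" using assms(1) by simp
qed

lemma dmatch_le:
  assumes "finite H" "is_matching H E Mt"
  shows "dmatch H E w \<theta> \<le> matching_cost H w \<theta> Mt"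
  unfolding dmatch_def using assms
  by (intro Min_le finite_imageI matchings_finite) auto

lemma empty_matching: "is_matching H E {}"
  unfolding is_matching_def by auto

lemma dmatch_ex:
  assumes "finite H"
  shows "\<exists>Mt. is_matching H E Mt \<and> dmatch H E w \<theta> = matching_cost H w \<theta> Mt"
proof -
  have "Min (matching_cost H w \<theta> ` {Mt. is_matching H E Mt}) \<in> matching_cost H w \<theta> ` {Mt. is_matching H E Mt}"
    using assms empty_matching[of H E]
    by (intro Min_in finite_imageI matchings_finite) auto
  then show ?thesis unfolding dmatch_def by auto
qed

lemma covered_sub:
  assumes "is_matching H E Mt" shows "covered Mt \<subseteq> H"
  using assms unfolding is_matching_def covered_def by fastforce

lemma lemB:
  assumes "is_matching (H - {x}) E Mt" "x \<in> H" "finite H"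
  shows "is_matching H E Mt \<and> matching_cost H w \<theta> Mt = \<theta>/2 + matching_cost (H - {x}) w \<theta> Mt"
proof -
  have m: "is_matching H E Mt" using assms(1) unfolding is_matching_def by auto
  have c: "covered Mt \<subseteq> H - {x}" using covered_sub[OF assms(1)] .
  have "H - covered Mt = insert x ((H - {x}) - covered Mt)" using c assms(2) by auto
  then have "card (H - covered Mt) = Suc (card ((H - {x}) - covered Mt))"
    using assms(3) by simp
  then show ?thesis using m unfolding matching_cost_def by (simp add: algebra_simps)
qed

lemma lemC:
  assumes "is_matching (H - {x,u}) E Mt" "x \<in> H" "u \<in> H" "E x u" "x \<noteq> u" "finite H"
  shows "is_matching H E (insert (x,u) Mt) \<and>
    matching_cost H w \<theta> (insert (x,u) Mt) = w x u + matching_cost (H - {x,u}) w \<theta> Mt"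
proof -
  have c: "covered Mt \<subseteq> H - {x,u}" using covered_sub[OF assms(1)] .
  have disj: "\<And>q. q \<in> Mt \<Longrightarrow> {fst q, snd q} \<inter> {x,u} = {}"
    using c unfolding covered_def by force
  have m1: "\<forall>(a,b)\<in>insert (x,u) Mt. a \<in> H \<and> b \<in> H \<and> E a b"
    using assms(1-4) unfolding is_matching_def by auto
  have m2: "\<forall>p\<in>insert (x,u) Mt. \<forall>q\<in>insert (x,u) Mt. p \<noteq> q \<longrightarrow> {fst p, snd p} \<inter> {fst q, snd q} = {}"
  proof (intro ballI impI)
    fix p q assume p: "p \<in> insert (x,u) Mt" and q: "q \<in> insert (x,u) Mt" and pq: "p \<noteq> q"
    show "{fst p, snd p} \<inter> {fst q, snd q} = {}"
    proof (cases "p = (x,u)")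
      case True
      then have "q \<in> Mt" using q pq by auto
      then show ?thesis using disj[of q] True by auto
    next
      case False
      then have pM: "p \<in> Mt" using p by auto
      show ?thesis
      proof (cases "q = (x,u)")
        case True
        then show ?thesis using disj[OF pM] by auto
      next
        case False
        then have "q \<in> Mt" using q by auto
        then show ?thesis using pM pq assms(1) unfolding is_matching_def by blast
      qed
    qed
  qed
  have m: "is_matching H E (insert (x,u) Mt)" unfolding is_matching_def using m1 m2 by (rule conjI)
  have fin: "finite Mt" using matching_finite[OF _ assms(1)] assms(6) by simp
  have nin: "(x,u) \<notin> Mt" using disj by fastforce
  have cov: "covered (insert (x,u) Mt) = {x,u} \<union> covered Mt" unfolding covered_def by auto
  have hc: "H - covered (insert (x,u) Mt) = (H - {x,u}) - covered Mt" using cov by auto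
  have s: "(\<Sum>(a,b)\<in>insert (x,u) Mt. w a b) = w x u + (\<Sum>(a,b)\<in>Mt. w a b)"
    using fin nin by (simp add: sum.insert)
  show ?thesis using m unfolding matching_cost_def hc s by simp
qed

lemma lemD:
  assumes "is_matching H E Mt" "x \<in> H" "finite H"
    and symw: "\<And>a b. E a b \<Longrightarrow> w a b = w b a" and symE: "\<And>a b. E a b \<Longrightarrow> E b a"
    and irr: "\<And>a. \<not> E a a"
  shows "(is_matching (H - {x}) E Mt \<and> matching_cost H w \<theta> Mt = \<theta>/2 + matching_cost (H - {x}) w \<theta> Mt)
    \<or> (\<exists>u Mt'. u \<in> H \<and> E x u \<and> u \<noteq> x \<and> is_matching (H - {x,u}) E Mt'
        \<and> matching_cost H w \<theta> Mt = w x u + matching_cost (H - {x,u}) w \<theta> Mt')"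
proof (cases "x \<in> covered Mt")
  case False
  have "is_matching (H - {x}) E Mt" using assms(1) False
    unfolding is_matching_def covered_def by force
  then show ?thesis using lemB[of H x E Mt w \<theta>] assms(2,3) by auto
next
  case True
  then obtain a b where ab: "(a,b) \<in> Mt" "x = a \<or> x = b" unfolding covered_def by force
  have abH: "a \<in> H" "b \<in> H" "E a b" using ab(1) assms(1) unfolding is_matching_def by auto
  have ne: "a \<noteq> b" using irr abH(3) by auto
  define Mt' where "Mt' = Mt - {(a,b)}"
  have m'1: "\<forall>(c,d)\<in>Mt'. c \<in> H - {a,b} \<and> d \<in> H - {a,b} \<and> E c d"
  proof
    fix q assume q: "q \<in> Mt'"
    then have qM: "q \<in> Mt" "q \<noteq> (a,b)" unfolding Mt'_def by auto
    have "{fst q, snd q} \<inter> {a, b} = {}" using assms(1) qM ab(1) unfolding is_matching_def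
      by (metis fst_conv snd_conv)
    moreover have "fst q \<in> H" "snd q \<in> H" "E (fst q) (snd q)"
      using assms(1) qM(1) unfolding is_matching_def by auto
    ultimately show "case q of (c,d) \<Rightarrow> c \<in> H - {a,b} \<and> d \<in> H - {a,b} \<and> E c d"
      by (cases q) auto
  qed
  have m': "is_matching (H - {a,b}) E Mt'"
    unfolding is_matching_def
  proof (rule conjI[OF m'1])
    show "\<forall>p\<in>Mt'. \<forall>q\<in>Mt'. p \<noteq> q \<longrightarrow> {fst p, snd p} \<inter> {fst q, snd q} = {}"
      using assms(1) unfolding is_matching_def Mt'_def by blast
  qed
  have ins: "insert (a,b) Mt' = Mt" using ab(1) unfolding Mt'_def by auto
  have cost: "matching_cost H w \<theta> Mt = w a b + matching_cost (H - {a,b}) w \<theta> Mt'"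
    using lemC[OF m' abH(1,2,3) ne assms(3), of w \<theta>] ins by simp
  show ?thesis
  proof (cases "x = a")
    case True
    then show ?thesis using m' cost abH ne by auto
  next
    case False
    then have xb: "x = b" using ab(2) by auto
    have e1: "{a,b} = {x,a}" using xb by auto
    have e2: "w a b = w x a" using symw abH(3) xb by simp
    show ?thesis
      apply (rule disjI2)
      apply (rule exI[of _ a], rule exI[of _ Mt'])
      using m' cost abH ne xb symE unfolding e1 e2 by auto
  qed
qed

lemma lemR:
  assumes "finite H" "x \<in> H"
    and symw: "\<And>a b. E a b \<Longrightarrow> w a b = w b a" and symE: "\<And>a b. E a b \<Longrightarrow> E b a"
    and irr: "\<And>a. \<not> E a a"
  shows "dmatch (H - {x}) E w \<theta> - dmatch H E w \<theta> =
    Max (insert (- \<theta> / 2) {- w x u - (dmatch (H - {x} - {u}) E w \<theta> - dmatch (H - {x}) E w \<theta>)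
       | u. u \<in> H \<and> E x u \<and> u \<noteq> x})"
    (is "?L = Max (insert _ ?B)")
proof -
  have fH: "finite (H - {x})" "\<And>u. finite (H - {x} - {u})" using assms(1) by auto
  have finB: "finite ?B" using assms(1) by (intro finite_image_set) auto
  have up1: "dmatch H E w \<theta> \<le> \<theta>/2 + dmatch (H - {x}) E w \<theta>"
  proof -
    obtain Mt where Mt: "is_matching (H - {x}) E Mt" "dmatch (H - {x}) E w \<theta> = matching_cost (H - {x}) w \<theta> Mt"
      using dmatch_ex[OF fH(1)] by blast
    have l: "is_matching H E Mt \<and> matching_cost H w \<theta> Mt = \<theta>/2 + matching_cost (H - {x}) w \<theta> Mt"
      using lemB[OF Mt(1) assms(2,1)] .
    then have "dmatch H E w \<theta> \<le> matching_cost H w \<theta> Mt" using dmatch_le[OF assms(1)] by blast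
    then show ?thesis using l Mt(2) by linarith
  qed
  have up2: "dmatch H E w \<theta> \<le> w x u + dmatch (H - {x} - {u}) E w \<theta>"
    if u: "u \<in> H" "E x u" "u \<noteq> x" for u
  proof -
    have eq: "H - {x} - {u} = H - {x,u}" by auto
    obtain Mt where Mt: "is_matching (H - {x,u}) E Mt" "dmatch (H - {x,u}) E w \<theta> = matching_cost (H - {x,u}) w \<theta> Mt"
      using dmatch_ex[of "H - {x,u}" E w \<theta>] assms(1) by auto
    have l: "is_matching H E (insert (x,u) Mt) \<and> matching_cost H w \<theta> (insert (x,u) Mt) = w x u + matching_cost (H - {x,u}) w \<theta> Mt"
      using lemC[OF Mt(1) assms(2) u(1,2) _ assms(1)] u(3) by auto
    then have "dmatch H E w \<theta> \<le> matching_cost H w \<theta> (insert (x,u) Mt)" using dmatch_le[OF assms(1)] by blast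
    then show ?thesis using l Mt(2) unfolding eq by linarith
  qed
  show ?thesis
  proof (rule Max_eqI[symmetric])
    show "finite (insert (- \<theta> / 2) ?B)" using finB by simp
    show "y \<le> ?L" if "y \<in> insert (- \<theta> / 2) ?B" for y
      using that up1 up2 by fastforce
    obtain Mt where Mt: "is_matching H E Mt" "dmatch H E w \<theta> = matching_cost H w \<theta> Mt"
      using dmatch_ex[OF assms(1)] by blast
    from lemD[OF Mt(1) assms(2,1) symw symE irr, where \<theta>=\<theta>]
    show "?L \<in> insert (- \<theta> / 2) ?B"
    proof
      assume h: "is_matching (H - {x}) E Mt \<and> matching_cost H w \<theta> Mt = \<theta>/2 + matching_cost (H - {x}) w \<theta> Mt"
      have "dmatch (H - {x}) E w \<theta> \<le> matching_cost (H - {x}) w \<theta> Mt" using dmatch_le[OF fH(1)] h by blast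
      then have "?L = - \<theta>/2" using up1 h Mt(2) by linarith
      then show ?thesis by simp
    next
      assume "\<exists>u Mt'. u \<in> H \<and> E x u \<and> u \<noteq> x \<and> is_matching (H - {x,u}) E Mt'
        \<and> matching_cost H w \<theta> Mt = w x u + matching_cost (H - {x,u}) w \<theta> Mt'"
      then obtain u Mt' where u: "u \<in> H" "E x u" "u \<noteq> x" "is_matching (H - {x,u}) E Mt'"
        "matching_cost H w \<theta> Mt = w x u + matching_cost (H - {x,u}) w \<theta> Mt'" by blast
      have eq: "H - {x} - {u} = H - {x,u}" by auto
      have "dmatch (H - {x,u}) E w \<theta> \<le> matching_cost (H - {x,u}) w \<theta> Mt'"
        using dmatch_le[of "H - {x,u}"] assms(1) u(4) by auto
      then have "dmatch H E w \<theta> = w x u + dmatch (H - {x} - {u}) E w \<theta>"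
        using up2[OF u(1-3)] u(5) Mt(2) unfolding eq by linarith
      then have "?L = - w x u - (dmatch (H - {x} - {u}) E w \<theta> - dmatch (H - {x}) E w \<theta>)" by simp
      then show ?thesis using u(1-3) by blast
    qed
  qed
qed

lemma main:
  assumes fV: "finite V"
    and symw: "\<And>a b. E a b \<Longrightarrow> w a b = w b a" and symE: "\<And>a b. E a b \<Longrightarrow> E b a"
    and irr: "\<And>a. \<not> E a a"
  shows "S \<subseteq> V \<Longrightarrow> x \<in> S \<Longrightarrow> card (V - S) \<le> n \<Longrightarrow>
    explore_val V E w \<theta> n S x = dmatch (V - S) E w \<theta> - dmatch (insert x (V - S)) E w \<theta>"
proof (induction n arbitrary: S x)
  case 0
  have e: "V - S = {}" using 0 fV by auto
  have "dmatch ({x} - {x}) E w \<theta> - dmatch {x} E w \<theta> =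
    Max (insert (- \<theta> / 2) {- w x u - (dmatch ({x} - {x} - {u}) E w \<theta> - dmatch ({x} - {x}) E w \<theta>)
       | u. u \<in> {x} \<and> E x u \<and> u \<noteq> x})"
    by (rule lemR[where H="{x}" and x=x and E=E and w=w and \<theta>=\<theta>, OF _ _ symw symE irr]) simp_all
  also have "\<dots> = - \<theta> / 2" by simp
  finally show ?case unfolding e by simp
next
  case (Suc n)
  define H where "H = insert x (V - S)"
  have H1: "H - {x} = V - S" using Suc.prems(2) unfolding H_def by auto
  have fH: "finite H" "x \<in> H" using fV unfolding H_def by auto
  have iff: "(u \<in> V \<and> E x u \<and> u \<notin> S) \<longleftrightarrow> (u \<in> H \<and> E x u \<and> u \<noteq> x)" for u
    using Suc.prems(2) unfolding H_def by auto
  have val: "explore_val V E w \<theta> n (insert u S) u = dmatch (H - {x} - {u}) E w \<theta> - dmatch (H - {x}) E w \<theta>"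
    if u: "u \<in> V" "E x u" "u \<notin> S" for u
  proof -
    have c: "card (V - S) = Suc (card (V - insert u S))"
    proof -
      have e: "V - S = insert u (V - insert u S)" using u by auto
      have f: "finite (V - insert u S)" using fV by blast
      have n: "u \<notin> V - insert u S" by blast
      show ?thesis unfolding e using card_insert_disjoint[OF f n] .
    qed
    have "explore_val V E w \<theta> n (insert u S) u = dmatch (V - insert u S) E w \<theta> - dmatch (insert u (V - insert u S)) E w \<theta>"
    proof (rule Suc.IH)
      show "insert u S \<subseteq> V" using Suc.prems(1) u(1) by blast
      show "u \<in> insert u S" by blast
      show "card (V - insert u S) \<le> n" using Suc.prems(3) c by linarith
    qed
    moreover have "V - insert u S = H - {x} - {u}" using H1 by auto
    moreover have "insert u (V - insert u S) = H - {x}" using H1 u by auto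
    ultimately show ?thesis by simp
  qed
  have setq: "{- w x u - explore_val V E w \<theta> n (insert u S) u | u. u \<in> V \<and> E x u \<and> u \<notin> S}
    = {- w x u - (dmatch (H - {x} - {u}) E w \<theta> - dmatch (H - {x}) E w \<theta>) | u. u \<in> H \<and> E x u \<and> u \<noteq> x}"
  proof (rule Collect_cong)
    fix y
    show "(\<exists>u. y = - w x u - explore_val V E w \<theta> n (insert u S) u \<and> u \<in> V \<and> E x u \<and> u \<notin> S) \<longleftrightarrow>
      (\<exists>u. y = - w x u - (dmatch (H - {x} - {u}) E w \<theta> - dmatch (H - {x}) E w \<theta>) \<and> u \<in> H \<and> E x u \<and> u \<noteq> x)"
    proof
      assume "\<exists>u. y = - w x u - explore_val V E w \<theta> n (insert u S) u \<and> u \<in> V \<and> E x u \<and> u \<notin> S"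
      then obtain u where u: "y = - w x u - explore_val V E w \<theta> n (insert u S) u" "u \<in> V" "E x u" "u \<notin> S" by blast
      have "y = - w x u - (dmatch (H - {x} - {u}) E w \<theta> - dmatch (H - {x}) E w \<theta>)" using u(1) val[OF u(2-4)] by simp
      moreover have "u \<in> H \<and> E x u \<and> u \<noteq> x" using iff[of u] u(2-4) by blast
      ultimately show "\<exists>u. y = - w x u - (dmatch (H - {x} - {u}) E w \<theta> - dmatch (H - {x}) E w \<theta>) \<and> u \<in> H \<and> E x u \<and> u \<noteq> x" by blast
    next
      assume "\<exists>u. y = - w x u - (dmatch (H - {x} - {u}) E w \<theta> - dmatch (H - {x}) E w \<theta>) \<and> u \<in> H \<and> E x u \<and> u \<noteq> x"
      then obtain u where u: "y = - w x u - (dmatch (H - {x} - {u}) E w \<theta> - dmatch (H - {x}) E w \<theta>)" "u \<in> H" "E x u" "u \<noteq> x" by blast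
      have u2: "u \<in> V" "E x u" "u \<notin> S" using iff[of u] u(2-4) by blast+
      have "y = - w x u - explore_val V E w \<theta> n (insert u S) u" using u(1) val[OF u2] by simp
      then show "\<exists>u. y = - w x u - explore_val V E w \<theta> n (insert u S) u \<and> u \<in> V \<and> E x u \<and> u \<notin> S" using u2 by blast
    qed
  qed
  have "explore_val V E w \<theta> (Suc n) S x = dmatch (H - {x}) E w \<theta> - dmatch H E w \<theta>"
    unfolding explore_val.simps(2) setq
    by (rule lemR[where H=H and x=x and E=E and w=w and \<theta>=\<theta>, OF fH symw symE irr, symmetric])
  then have "explore_val V E w \<theta> (Suc n) S x = dmatch (V - S) E w \<theta> - dmatch H E w \<theta>"
    unfolding H1 .
  then show ?case unfolding H_def .
qed

theorem proposition1:
  fixes V :: "'a set" and E :: "'a \<Rightarrow> 'a \<Rightarrow> bool" and w :: "'a \<Rightarrow> 'a \<Rightarrow> real"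
    and \<theta> :: real and v :: 'a
  assumes "wgraph V E w" and "\<theta> \<ge> 0" and "v \<in> V"
  shows "bob_payoff V E w \<theta> v = dmatch V E w \<theta> - dmatch (V - {v}) E w \<theta>"
proof -
  have fV: "finite V" and symw: "\<And>a b. E a b \<Longrightarrow> w a b = w b a" and symE: "\<And>a b. E a b \<Longrightarrow> E b a"
    and irr: "\<And>a. \<not> E a a" using assms(1) unfolding wgraph_def by auto
  have "card (V - {v}) \<le> card V" using fV by (simp add: card_mono)
  then have "explore_val V E w \<theta> (card V) {v} v = dmatch (V - {v}) E w \<theta> - dmatch (insert v (V - {v})) E w \<theta>"
    using main[where V=V and E=E and w=w and S="{v}" and x=v and n="card V" and \<theta>=\<theta>, OF fV symw symE irr] assms(3) by auto
  moreover have "insert v (V - {v}) = V" using assms(3) by auto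
  ultimately show ?thesis unfolding bob_payoff_def by simp
qed

end
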